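(* Let $\mathcal E\subset\mathcal V$ be finite, let $\mathcal R_0=\mathcal E\cup-\mathcal S(L)$, $\mathcal R_{i+1}=\{v\in\mathcal V:\pi(\Psi(v))\cap\mathcal R_i\neq\emptyset\}$ for $i\geq0$, and $\mathcal R=\bigcup_{i\ge0}\mathcal R_i$. Let $H\in\mathbb Z_{\geq0}$ be such that $d\ell^H\mathcal E\subset\mathbb Z$ and let $N\in\mathbb Q_{\geq0}$ be such that $\mathcal E\cup-\mathcal S(L)\subset\mathbb Q_{\leq N}$. Put $c=\left\lfloor(n+1)\frac{N+\mu_\kappa}{\tau}\right\rfloor+H$. Then $\mathcal R_i=\mathcal R$ for every integer $i\geq c$.
   Context: Let $\mathbf K$ be a field and $\ell\geq 2$ an integer. Let $L=a_n\phi_\ell^n+\dots+a_0$ with $n\geq1$, $a_i\in\mathbf K[z]$, $a_0a_n\neq0$, where $\phi_\ell(f)(z)=f(z^\ell)$ acting on Hahn series with coefficients in $\mathbf K$ and value group $\mathbb Q$. Let $\mathcal P(L)=\{(\ell^i,j): 0\le i\le n,\ j\in\operatorname{supp} a_i\}$. The Newton polygon of $L$ is the convex hull of $\{(\ell^i,j): 0\le i\le n,\ j\geq\operatorname{val} a_i\}\subset\mathbb R^2$; its non-vertical edges have slopes $\mu_1<\dots<\mu_\kappa$, $\mathcal S(L)=\{\mu_1,\dots,\mu_\kappa\}$. Let $d\geq1$ be a common multiple of the denominators of the $\mu_k$. Define $\Psi(v)=\{v\ell^i+j:(\ell^i,j)\in\mathcal P(L)\}$, $\pi(q)=\max\{(q-j)/\ell^i:(\ell^i,j)\in\mathcal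 P(L)\}$. Let $\mathcal V_0=-\mathcal S(L)$, $\mathcal V_{i+1}=\bigcup_{v\in\mathcal V_i}\pi(\Psi(v))$, $\mathcal V=\bigcup_{i\ge0}\mathcal V_i$ (a well-ordered subset of $\bigcup_{i\ge0}\frac1{d\ell^i}\mathbb Z$). For $v\in\mathbb Q$ let $\epsilon(v)=\min\{w\in\mathcal V: w>v\}-v\in\mathbb Q_{>0}\cup\{+\infty\}$ ($+\infty$ if this set is empty), and $\tau=\min\{\epsilon(-\mu_1),\dots,\epsilon(-\mu_\kappa),(d\ell^n)^{-1}\}\in\mathbb Q_{>0}$. *)

theory Defs
  imports "HOL-Analysis.Analysis" "HOL-Computational_Algebra.Polynomial"
begin

text \<open>The operator L = a_n phi^n + ... + a_0 is represented by its coefficient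
  polynomials a 0, ..., a n (a i for i > n is irrelevant), together with n and l.\<close>

definition val :: "'a::zero poly \<Rightarrow> nat" where
  "val p = (LEAST j. coeff p j \<noteq> 0)"

definition PL :: "(nat \<Rightarrow> 'a::zero poly) \<Rightarrow> nat \<Rightarrow> nat \<Rightarrow> (nat \<times> nat) set" where
  "PL a n l = {(l ^ i, j) | i j. i \<le> n \<and> coeff (a i) j \<noteq> 0}"

definition newton_polygon :: "(nat \<Rightarrow> 'a::zero poly) \<Rightarrow> nat \<Rightarrow> nat \<Rightarrow> (real \<times> real) set" where
  "newton_polygon a n l =
     convex hull {(real (l ^ i), y) | i y. i \<le> n \<and> a i \<noteq> 0 \<and> y \<ge> real (val (a i))}"

definition slopes :: "(nat \<Rightarrow> 'a::zero poly) \<Rightarrow> nat \<Rightarrow> nat \<Rightarrow> real set" where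
  "slopes a n l = {\<mu>. \<exists>F p q. F face_of newton_polygon a n l \<and> aff_dim F = 1 \<and>
       p \<in> F \<and> q \<in> F \<and> fst p \<noteq> fst q \<and> \<mu> = (snd q - snd p) / (fst q - fst p)}"

definition Psi :: "(nat \<Rightarrow> 'a::zero poly) \<Rightarrow> nat \<Rightarrow> nat \<Rightarrow> real \<Rightarrow> real set" where
  "Psi a n l v = (\<lambda>(x, j). v * real x + real j) ` PL a n l"

definition piL :: "(nat \<Rightarrow> 'a::zero poly) \<Rightarrow> nat \<Rightarrow> nat \<Rightarrow> real \<Rightarrow> real" where
  "piL a n l q = Max ((\<lambda>(x, j). (q - real j) / real x) ` PL a n l)"

primrec Vseq :: "(nat \<Rightarrow> 'a::zero poly) \<Rightarrow> nat \<Rightarrow> nat \<Rightarrow> nat \<Rightarrow> real set" where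
  "Vseq a n l 0 = uminus ` slopes a n l"
| "Vseq a n l (Suc i) = (\<Union>v\<in>Vseq a n l i. piL a n l ` Psi a n l v)"

definition Vset :: "(nat \<Rightarrow> 'a::zero poly) \<Rightarrow> nat \<Rightarrow> nat \<Rightarrow> real set" where
  "Vset a n l = (\<Union>i. Vseq a n l i)"

definition eps :: "(nat \<Rightarrow> 'a::zero poly) \<Rightarrow> nat \<Rightarrow> nat \<Rightarrow> real \<Rightarrow> ereal" where
  "eps a n l v = (if \<exists>w\<in>Vset a n l. w > v
      then ereal ((LEAST w. w \<in> Vset a n l \<and> w > v) - v) else \<infinity>)"

definition tau :: "(nat \<Rightarrow> 'a::zero poly) \<Rightarrow> nat \<Rightarrow> nat \<Rightarrow> nat \<Rightarrow> real" where
  "tau a n l d = real_of_ereal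
     (Min ({ereal (1 / (real d * real l ^ n))} \<union> (\<lambda>\<mu>. eps a n l (- \<mu>)) ` slopes a n l))"

primrec Rseq :: "(nat \<Rightarrow> 'a::zero poly) \<Rightarrow> nat \<Rightarrow> nat \<Rightarrow> real set \<Rightarrow> nat \<Rightarrow> real set" where
  "Rseq a n l E 0 = E \<union> uminus ` slopes a n l"
| "Rseq a n l E (Suc i) = {v \<in> Vset a n l. piL a n l ` Psi a n l v \<inter> Rseq a n l E i \<noteq> {}}"

end

theory Submission
  imports Defs "HOL-Library.Sublist"
begin


definition hbad :: "(nat \<Rightarrow> 'a list) \<Rightarrow> bool" where
  "hbad f \<longleftrightarrow> (\<forall>i j. i < j \<longrightarrow> \<not> list_emb (=) (f i) (f j))"

definition hBAD :: "'a set \<Rightarrow> (nat \<Rightarrow> 'a list) set" where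
  "hBAD A = {f. (\<forall>i. set (f i) \<subseteq> A) \<and> hbad f}"

definition hcands :: "'a set \<Rightarrow> 'a list list \<Rightarrow> 'a list set" where
  "hcands A ps = {g (length ps) | g. g \<in> hBAD A \<and> (\<forall>k<length ps. g k = ps ! k)}"

definition hchoose :: "'a set \<Rightarrow> 'a list list \<Rightarrow> 'a list" where
  "hchoose A ps = (SOME w. w \<in> hcands A ps \<and> (\<forall>w'\<in>hcands A ps. length w \<le> length w'))"

fun hpre :: "'a set \<Rightarrow> nat \<Rightarrow> 'a list list" where
  "hpre A 0 = []"
| "hpre A (Suc n) = hpre A n @ [hchoose A (hpre A n)]"

lemma hchoose_ex:
  assumes "hcands A ps \<noteq> {}"
  shows "hchoose A ps \<in> hcands A ps \<and> (\<forall>w'\<in>hcands A ps. length (hchoose A ps) \<le> length w')"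
proof -
  obtain w0 where "w0 \<in> hcands A ps" using assms by blast
  then have "\<exists>w. w \<in> hcands A ps \<and> (\<forall>w'. w' \<in> hcands A ps \<longrightarrow> length w \<le> length w')"
    using ex_has_least_nat[of "\<lambda>w. w \<in> hcands A ps" w0 length] by blast
  then have "\<exists>w. w \<in> hcands A ps \<and> (\<forall>w'\<in>hcands A ps. length w \<le> length w')" by blast
  then show ?thesis unfolding hchoose_def by (rule someI_ex)
qed

lemma hpre_length [simp]: "length (hpre A n) = n"
  by (induction n) auto

lemma hpre_inv:
  assumes "hBAD A \<noteq> {}"
  shows "\<exists>g\<in>hBAD A. \<forall>k<n. g k = hpre A n ! k"
proof (induction n)
  case 0
  then show ?case using assms by auto
next
  case (Suc n)
  then obtain g where g: "g \<in> hBAD A" "\<forall>k<n. g k = hpre A n ! k" by blast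
  then have "g n \<in> hcands A (hpre A n)" unfolding hcands_def
    by (intro CollectI exI[of _ g]) simp
  then have "hchoose A (hpre A n) \<in> hcands A (hpre A n)" using hchoose_ex by blast
  then obtain g' where g'0: "g' \<in> hBAD A" "\<forall>k<n. g' k = hpre A n ! k" "hchoose A (hpre A n) = g' n"
    unfolding hcands_def hpre_length mem_Collect_eq by blast
  then have g': "g' \<in> hBAD A" "\<forall>k<n. g' k = hpre A n ! k" "g' n = hchoose A (hpre A n)" by auto
  have "\<forall>k<Suc n. g' k = hpre A (Suc n) ! k"
  proof (intro allI impI)
    fix k assume "k < Suc n"
    then show "g' k = hpre A (Suc n) ! k"
      using g' by (cases "k < n") (auto simp: nth_append less_Suc_eq)
  qed
  then show ?case using g' by blast
qed

definition hmb :: "'a set \<Rightarrow> nat \<Rightarrow> 'a list" where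
  "hmb A k = hchoose A (hpre A k)"

lemma hpre_nth: "k < m \<Longrightarrow> hpre A m ! k = hmb A k"
proof (induction m)
  case 0 then show ?case by simp
next
  case (Suc m)
  then show ?case by (cases "k < m") (auto simp: nth_append hmb_def less_Suc_eq)
qed

lemma hmb_props:
  assumes "hBAD A \<noteq> {}"
  shows "hmb A \<in> hBAD A"
    and "\<And>g m. g \<in> hBAD A \<Longrightarrow> (\<forall>k<m. g k = hmb A k) \<Longrightarrow> length (hmb A m) \<le> length (g m)"
proof -
  have sets: "set (hmb A i) \<subseteq> A" for i
  proof -
    obtain g where "g \<in> hBAD A" "\<forall>k<Suc i. g k = hpre A (Suc i) ! k"
      using hpre_inv[OF assms] by blast
    then have "g i = hmb A i" using hpre_nth[of i "Suc i" A] by simp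
    then show ?thesis using \<open>g \<in> hBAD A\<close> unfolding hBAD_def by (metis (mono_tags, lifting) mem_Collect_eq)
  qed
  have bad: "hbad (hmb A)"
    unfolding hbad_def
  proof (intro allI impI)
    fix i j :: nat assume ij: "i < j"
    obtain g where "g \<in> hBAD A" "\<forall>k<Suc j. g k = hpre A (Suc j) ! k"
      using hpre_inv[OF assms] by blast
    then have "g i = hmb A i" "g j = hmb A j" "hbad g"
      using hpre_nth[of i "Suc j" A] hpre_nth[of j "Suc j" A] ij unfolding hBAD_def by auto
    then show "\<not> list_emb (=) (hmb A i) (hmb A j)" using ij unfolding hbad_def by metis
  qed
  show "hmb A \<in> hBAD A" using sets bad unfolding hBAD_def by auto
  fix g m assume g: "g \<in> hBAD A" "\<forall>k<m. g k = hmb A k"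
  then have "g m \<in> hcands A (hpre A m)"
    unfolding hcands_def using hpre_nth[of _ m A] by (intro CollectI exI[of _ g]) simp
  then show "length (hmb A m) \<le> length (g m)"
    using hchoose_ex[of A "hpre A m"] unfolding hmb_def by blast
qed

theorem higman:
  fixes f :: "nat \<Rightarrow> 'a list"
  assumes "finite A" and "\<And>i. set (f i) \<subseteq> A"
  shows "\<exists>i j. i < j \<and> list_emb (=) (f i) (f j)"
proof (rule ccontr)
  assume "\<not> ?thesis"
  then have "f \<in> hBAD A" using assms(2) unfolding hBAD_def hbad_def by auto
  then have ne: "hBAD A \<noteq> {}" by blast
  define m where "m = hmb A"
  have mB: "m \<in> hBAD A" and mmin: "\<And>g k. g \<in> hBAD A \<Longrightarrow> (\<forall>i<k. g i = m i) \<Longrightarrow> length (m k) \<le> length (g k)"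
    using hmb_props[OF ne] unfolding m_def by auto
  have mbad: "\<And>i j. i < j \<Longrightarrow> \<not> list_emb (=) (m i) (m j)" using mB unfolding hBAD_def hbad_def by blast
  have mset: "\<And>i. set (m i) \<subseteq> A" using mB unfolding hBAD_def by blast
  have mne: "m i \<noteq> []" for i
  proof
    assume "m i = []"
    then have "list_emb (=) (m i) (m (Suc i))" by simp
    then show False using mbad[of i "Suc i"] by simp
  qed
  have "finite ((\<lambda>i. hd (m i)) ` UNIV)"
  proof (rule finite_subset[OF _ assms(1)])
    show "range (\<lambda>i. hd (m i)) \<subseteq> A" using mne mset hd_in_set by blast
  qed
  then obtain i1 where "\<not> finite {i \<in> UNIV. hd (m i) = hd (m i1)}"
    using pigeonhole_infinite[of "UNIV :: nat set" "\<lambda>i. hd (m i)"] by auto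
  then have infI: "infinite {i. hd (m i) = hd (m i1)}" by simp
  define I where "I = {i. hd (m i) = hd (m i1)}"
  define \<phi> where "\<phi> = enumerate I"
  have \<phi>sm: "strict_mono \<phi>" unfolding \<phi>_def I_def using infI strict_mono_enumerate by blast
  have \<phi>I: "hd (m (\<phi> k)) = hd (m i1)" for k
    using enumerate_in_set[OF infI] unfolding \<phi>_def I_def by blast
  define i0 where "i0 = \<phi> 0"
  define g where "g k = (if k < i0 then m k else tl (m (\<phi> (k - i0))))" for k
  have gB: "g \<in> hBAD A"
    unfolding hBAD_def hbad_def
  proof (intro CollectI conjI allI impI)
    fix i show "set (g i) \<subseteq> A" 
    proof -
      have "set (tl xs) \<subseteq> set xs" for xs :: "'a list" by (cases xs) auto
      then show ?thesis using mset unfolding g_def by (auto intro: subset_trans)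
    qed
  next
    fix i j :: nat assume ij: "i < j"
    show "\<not> list_emb (=) (g i) (g j)"
    proof (cases "j < i0")
      case True then show ?thesis using ij mbad unfolding g_def by auto
    next
      case jF: False
      show ?thesis
      proof (cases "i < i0")
        case True
        have "\<phi> 0 \<le> \<phi> (j - i0)" using \<phi>sm by (simp add: strict_mono_less_eq)
        then have lt: "i < \<phi> (j - i0)" using True unfolding i0_def by linarith
        show ?thesis
        proof
          assume "list_emb (=) (g i) (g j)"
          then have "list_emb (=) (m i) (tl (m (\<phi> (j - i0))))" using True jF unfolding g_def by auto
          then have "list_emb (=) (m i) (m (\<phi> (j - i0)))"
            using mne[of "\<phi> (j - i0)"] by (metis list.collapse list_emb_Cons)
          then show False using mbad lt by blast
        qed
      next
        case False
        have lt: "\<phi> (i - i0) < \<phi> (j - i0)" using \<phi>sm False ij by (simp add: strict_mono_less)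
        show ?thesis
        proof
          assume "list_emb (=) (g i) (g j)"
          then have e: "list_emb (=) (tl (m (\<phi> (i - i0)))) (tl (m (\<phi> (j - i0))))"
            using False jF unfolding g_def by auto
          have "m (\<phi> (i - i0)) = hd (m i1) # tl (m (\<phi> (i - i0)))"
            using mne \<phi>I by (metis list.collapse)
          moreover have "m (\<phi> (j - i0)) = hd (m i1) # tl (m (\<phi> (j - i0)))"
            using mne \<phi>I by (metis list.collapse)
          ultimately have "list_emb (=) (m (\<phi> (i - i0))) (m (\<phi> (j - i0)))"
            using e list_emb_Cons2[of "(=)"] by metis
          then show False using mbad lt by blast
        qed
      qed
    qed
  qed
  have "\<forall>i<i0. g i = m i" unfolding g_def by simp
  then have "length (m i0) \<le> length (g i0)" using mmin[OF gB] by blast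
  also have "g i0 = tl (m i0)" unfolding g_def i0_def by simp
  finally show False using mne[of i0] by (cases "m i0") auto
qed


lemma foldr_expansive:
  assumes "\<forall>p\<in>A. \<forall>y. G p y \<ge> (y::real)" "set ys \<subseteq> A"
  shows "s \<le> foldr G ys s"
  using assms(2)
proof (induction ys)
  case Nil then show ?case by simp
next
  case (Cons y ys)
  then have "s \<le> foldr G ys s" by simp
  also have "\<dots> \<le> G y (foldr G ys s)" using assms(1) Cons.prems by simp
  finally show ?case by simp
qed

lemma foldr_emb:
  assumes "list_emb (=) xs ys" "set ys \<subseteq> A"
    and mono: "\<forall>p\<in>A. mono (G p)" and exp: "\<forall>p\<in>A. \<forall>y. G p y \<ge> (y::real)"
  shows "foldr G xs s \<le> foldr G ys s"
  using assms(1,2)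
proof (induction rule: list_emb.induct)
  case (list_emb_Nil ys)
  then show ?case using foldr_expansive[OF exp] by simp
next
  case (list_emb_Cons xs ys y)
  then have "foldr G xs s \<le> foldr G ys s" by simp
  also have "\<dots> \<le> G y (foldr G ys s)" using exp list_emb_Cons.prems by simp
  finally show ?case by simp
next
  case (list_emb_Cons2 x y xs ys)
  then have "foldr G xs s \<le> foldr G ys s" by simp
  then have "G y (foldr G xs s) \<le> G y (foldr G ys s)"
    using mono list_emb_Cons2.prems by (simp add: monoD)
  then show ?case using list_emb_Cons2 by simp
qed

lemma wo_closure:
  fixes G :: "'p \<Rightarrow> real \<Rightarrow> real"
  assumes "finite A" "finite B" and mono: "\<forall>p\<in>A. mono (G p)" and exp: "\<forall>p\<in>A. \<forall>y. G p y \<ge> y"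
  shows "wf {(y,z). y \<in> {foldr G ws s | ws s. set ws \<subseteq> A \<and> s \<in> B} \<and>
                    z \<in> {foldr G ws s | ws s. set ws \<subseteq> A \<and> s \<in> B} \<and> y < z}"
    (is "wf ?r")
proof -
  let ?C = "{foldr G ws s | ws s. set ws \<subseteq> A \<and> s \<in> B}"
  have "\<not> (\<exists>f. \<forall>i. (f (Suc i), f i) \<in> ?r)"
  proof
    assume "\<exists>f. \<forall>i. (f (Suc i), f i) \<in> ?r"
    then obtain f where f: "\<And>i. (f (Suc i), f i) \<in> ?r" by blast
    then have fC: "\<And>i. f i \<in> ?C" and fdec: "\<And>i. f (Suc i) < f i" by auto
    have fdec2: "f (i + Suc k) < f i" for i k
    proof (induction k)
      case 0 then show ?case using fdec[of i] by simp
    next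
      case (Suc k) then show ?case using fdec[of "i + Suc k"] by simp
    qed
    have fdec3: "i < j \<Longrightarrow> f j < f i" for i j
      using fdec2[of i "j - Suc i"] by simp
    have "\<forall>i. \<exists>q. f i = foldr G (fst q) (snd q) \<and> set (fst q) \<subseteq> A \<and> snd q \<in> B"
      using fC by fastforce
    then obtain h where h: "\<forall>i. f i = foldr G (fst (h i)) (snd (h i)) \<and> set (fst (h i)) \<subseteq> A \<and> snd (h i) \<in> B"
      by (rule choice[THEN exE])
    define ws where "ws i = fst (h i)" for i
    define ss where "ss i = snd (h i)" for i
    have wss: "\<And>i. f i = foldr G (ws i) (ss i) \<and> set (ws i) \<subseteq> A \<and> ss i \<in> B"
      using h unfolding ws_def ss_def by blast
    have "finite (ss ` UNIV)" using wss assms(2) by (meson finite_subset image_subsetI)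
    then obtain i1 where "\<not> finite {i \<in> UNIV. ss i = ss i1}"
      using pigeonhole_infinite[of "UNIV :: nat set" ss] by auto
    then have infI: "infinite {i. ss i = ss i1}" by simp
    define \<phi> where "\<phi> = enumerate {i. ss i = ss i1}"
    have \<phi>sm: "strict_mono \<phi>" unfolding \<phi>_def using infI strict_mono_enumerate by blast
    have \<phi>I: "ss (\<phi> k) = ss i1" for k
      using enumerate_in_set[OF infI] unfolding \<phi>_def by blast
    obtain k k' where kk: "k < k'" "list_emb (=) (ws (\<phi> k)) (ws (\<phi> k'))"
      using higman[OF assms(1), of "\<lambda>k. ws (\<phi> k)"] wss by blast
    have "f (\<phi> k) \<le> f (\<phi> k')"
      using foldr_emb[OF kk(2) _ mono exp, of "ss i1"] wss[of "\<phi> k"] wss[of "\<phi> k'"] \<phi>I by simp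
    moreover have "f (\<phi> k') < f (\<phi> k)" using fdec3 \<phi>sm kk(1) strict_mono_less by blast
    ultimately show False by simp
  qed
  then show ?thesis using wf_iff_no_infinite_down_chain by blast
qed

lemma wo_closure_min:
  fixes G :: "'p \<Rightarrow> real \<Rightarrow> real"
  assumes "finite A" "finite B" "\<forall>p\<in>A. mono (G p)" "\<forall>p\<in>A. \<forall>y. G p y \<ge> y"
    and "W \<subseteq> {foldr G ws s | ws s. set ws \<subseteq> A \<and> s \<in> B}" "W \<noteq> {}"
  shows "\<exists>w\<in>W. \<forall>w'\<in>W. w \<le> w'"
proof -
  obtain w0 where "w0 \<in> W" using assms(6) by blast
  from wfE_min[OF wo_closure[OF assms(1-4)] this]
  obtain z where z: "z \<in> W" "\<And>y. (y, z) \<in> {(y,z). y \<in> {foldr G ws s | ws s. set ws \<subseteq> A \<and> s \<in> B} \<and>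
                    z \<in> {foldr G ws s | ws s. set ws \<subseteq> A \<and> s \<in> B} \<and> y < z} \<Longrightarrow> y \<notin> W"
    by blast
  have "\<forall>w'\<in>W. z \<le> w'"
  proof
    fix w' assume w': "w' \<in> W"
    show "z \<le> w'"
    proof (rule ccontr)
      assume "\<not> z \<le> w'"
      then have "(w', z) \<in> {(y,z). y \<in> {foldr G ws s | ws s. set ws \<subseteq> A \<and> s \<in> B} \<and>
                    z \<in> {foldr G ws s | ws s. set ws \<subseteq> A \<and> s \<in> B} \<and> y < z}"
        using w' z(1) assms(5) by auto
      then show False using z(2) w' by blast
    qed
  qed
  then show ?thesis using z(1) by blast
qed




lemma collinear_line:
  fixes F :: "(real \<times> real) set"
  assumes "collinear F" "p \<in> F" "q \<in> F" "fst p \<noteq> fst q" "r \<in> F"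
  shows "snd r - snd p = ((snd q - snd p) / (fst q - fst p)) * (fst r - fst p)"
proof -
  obtain u where u: "\<forall>x\<in>F. \<forall>y\<in>F. \<exists>c. x - y = c *\<^sub>R u" using assms(1) unfolding collinear_def by blast
  obtain c1 where c1: "q - p = c1 *\<^sub>R u" using u assms(2,3) by blast
  obtain c2 where c2: "r - p = c2 *\<^sub>R u" using u assms(2,5) by blast
  have e1: "fst q - fst p = c1 * fst u" "snd q - snd p = c1 * snd u"
    using arg_cong[OF c1, of fst] arg_cong[OF c1, of snd] by auto
  have e2: "fst r - fst p = c2 * fst u" "snd r - snd p = c2 * snd u"
    using arg_cong[OF c2, of fst] arg_cong[OF c2, of snd] by auto
  have "c1 \<noteq> 0" "fst u \<noteq> 0" using e1 assms(4) by auto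
  then show ?thesis using e1 e2 by (simp add: field_simps)
qed

lemma comb_aux:
  fixes u t k z :: real
  assumes "u * (1 + t) = 1"
  shows "(1 - u) * k + u * (z + t * (z - k)) = z"
proof -
  have "(1 - u) * k + u * (z + t * (z - k)) = k - (u * (1 + t)) * k + (u * (1 + t)) * z"
    by (simp add: algebra_simps)
  then show ?thesis using assms by simp
qed

lemma face_above_line:
  fixes G0 :: "(real \<times> real) set"
  assumes up: "\<And>z t. z \<in> G0 \<Longrightarrow> t \<ge> 0 \<Longrightarrow> z + (0,t) \<in> G0"
    and F: "F face_of convex hull G0" "collinear F" "p \<in> F" "q \<in> F" "fst p < fst q"
    and k: "k \<in> convex hull G0"
  shows "snd k - snd p \<ge> ((snd q - snd p) / (fst q - fst p)) * (fst k - fst p)"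
proof (rule ccontr)
  define \<mu> where "\<mu> = (snd q - snd p) / (fst q - fst p)"
  define K where "K = convex hull G0"
  assume "\<not> ?thesis"
  then have kb: "snd k - snd p < \<mu> * (fst k - fst p)" unfolding \<mu>_def by simp
  have upK: "z + (0,t) \<in> K" if "z \<in> K" "t \<ge> 0" for z t
  proof -
    have "(\<lambda>x. (0,t) + x) ` G0 \<subseteq> G0" using up that(2) by (auto simp: add.commute)
    then have "convex hull ((\<lambda>x. (0,t) + x) ` G0) \<subseteq> K" unfolding K_def by (rule hull_mono)
    moreover have "(0,t) + z \<in> convex hull ((\<lambda>x. (0,t) + x) ` G0)"
      unfolding convex_hull_translation using that(1) K_def by blast
    ultimately have "(0,t) + z \<in> K" by blast
    then show ?thesis by (simp add: add.commute)
  qed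
  have FK: "F \<subseteq> K" using F(1) face_of_imp_subset K_def by blast
  have cF: "convex F" using F(1) face_of_imp_convex by blast
  have line: "snd r - snd p = \<mu> * (fst r - fst p)" if "r \<in> F" for r
    using collinear_line[OF F(2,3,4) _ that] F(5) unfolding \<mu>_def by simp
  define z where "z = (1/2) *\<^sub>R p + (1/2) *\<^sub>R q"
  have zF: "z \<in> F" unfolding z_def using cF F(3,4) by (intro convexD) auto
  define dx where "dx = fst q - fst p"
  have dx: "dx > 0" using F(5) dx_def by simp
  define t where "t = min 1 (dx / (2 * (\<bar>fst z - fst k\<bar> + 1)))"
  define cc where "cc = 2 * (\<bar>fst z - fst k\<bar> + 1)"
  have cc: "cc > 0" unfolding cc_def by (simp add: add_nonneg_pos)
  have t0: "t > 0" unfolding t_def using dx cc cc_def[symmetric] by simp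
  have tb: "t * \<bar>fst z - fst k\<bar> \<le> dx / 2"
  proof -
    have "t \<le> dx / (2 * (\<bar>fst z - fst k\<bar> + 1))" unfolding t_def by simp
    then have "t * cc \<le> dx" using cc unfolding cc_def[symmetric] by (simp add: le_divide_eq)
    then have "t * (\<bar>fst z - fst k\<bar> + 1) \<le> dx / 2"
      unfolding cc_def by (simp add: algebra_simps)
    moreover have "t * \<bar>fst z - fst k\<bar> \<le> t * (\<bar>fst z - fst k\<bar> + 1)" using t0 by simp
    ultimately show ?thesis by linarith
  qed
  define w where "w = z + t *\<^sub>R (z - k)"
  have fz: "fst z = (fst p + fst q) / 2" "snd z = (snd p + snd q) / 2" unfolding z_def by auto
  have fw: "fst w = fst z + t * (fst z - fst k)" "snd w = snd z + t * (snd z - snd k)" unfolding w_def by auto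
  have a1: "- \<bar>fst z - fst k\<bar> \<le> fst z - fst k" "fst z - fst k \<le> \<bar>fst z - fst k\<bar>" by auto
  have a2: "- (t * \<bar>fst z - fst k\<bar>) \<le> t * (fst z - fst k)" "t * (fst z - fst k) \<le> t * \<bar>fst z - fst k\<bar>"
    using mult_left_mono[OF a1(1), of t] mult_left_mono[OF a1(2), of t] t0 by auto
  obtain A B where AB: "A = t * (fst z - fst k)" "B = t * \<bar>fst z - fst k\<bar>" by blast
  have wx1: "fst w \<ge> fst p" using a2 tb fw fz dx_def unfolding AB[symmetric] by argo
  have wx2: "fst w \<le> fst q" using a2 tb fw fz dx_def unfolding AB[symmetric] by argo
  define \<theta> where "\<theta> = (fst w - fst p) / dx"
  have th: "0 \<le> \<theta>" "\<theta> \<le> 1" unfolding \<theta>_def using wx1 wx2 dx dx_def by auto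
  define r where "r = (1 - \<theta>) *\<^sub>R p + \<theta> *\<^sub>R q"
  have rF: "r \<in> F" unfolding r_def using cF F(3,4) th by (intro convexD) auto
  have rx1: "fst r = fst p + \<theta> * (fst q - fst p)" unfolding r_def by (simp add: algebra_simps)
  have rx2: "\<theta> * (fst q - fst p) = fst w - fst p" unfolding \<theta>_def dx_def using F(5) by simp
  have rx: "fst r = fst w" using rx1 rx2 by argo
  have zl: "snd z - snd p = \<mu> * (fst z - fst p)" using line[OF zF] .
  have rl: "snd r - snd p = \<mu> * (fst r - fst p)" using line[OF rF] .
  have hpos: "snd w - snd r > 0"
  proof -
    have "snd w - snd r = snd z + t * (snd z - snd k) - snd p - \<mu> * (fst w - fst p)"
      using fw rl rx by simp
    also have "\<dots> = t * (\<mu> * (fst k - fst p) - (snd k - snd p))"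
    proof -
      have sz: "snd z = snd p + \<mu> * (fst z - fst p)" using zl by argo
      show ?thesis unfolding fw(1) sz by (simp add: algebra_simps)
    qed
    finally show ?thesis using t0 kb by simp
  qed
  have "w = r + (0, snd w - snd r)" using rx by (simp add: prod_eq_iff)
  then have wK: "w \<in> K" using upK[OF _ ] FK rF hpos by (metis less_eq_real_def subsetD)
  have kK: "k \<in> K" using k K_def by simp
  have kw: "k \<noteq> w"
  proof
    assume "k = w"
    then have "snd w - snd p < \<mu> * (fst w - fst p)" using kb by simp
    moreover have "snd r - snd p = \<mu> * (fst w - fst p)" using rl rx by simp
    ultimately show False using hpos by simp
  qed
  have "z \<in> open_segment k w"
    unfolding in_segment
  proof (intro conjI exI[of _ "1 / (1 + t)"])
    show "k \<noteq> w" by (rule kw)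
    show "0 < 1 / (1 + t)" using t0 by simp
    show "1 / (1 + t) < 1" using t0 by simp
    have "(1 - 1 / (1 + t)) *\<^sub>R k + (1 / (1 + t)) *\<^sub>R w = z"
    proof (rule prod_eqI)
      have u1: "(1 / (1 + t)) * (1 + t) = 1" using t0 by simp
      show "fst ((1 - 1 / (1 + t)) *\<^sub>R k + (1 / (1 + t)) *\<^sub>R w) = fst z"
        using comb_aux[OF u1, of "fst k" "fst z"] unfolding w_def by simp
      show "snd ((1 - 1 / (1 + t)) *\<^sub>R k + (1 / (1 + t)) *\<^sub>R w) = snd z"
        using comb_aux[OF u1, of "snd k" "snd z"] unfolding w_def by simp
    qed
    then show "z = (1 - 1 / (1 + t)) *\<^sub>R k + (1 / (1 + t)) *\<^sub>R w" by simp
  qed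
  then have "k \<in> F" using face_ofD[OF F(1) _ _ _ zF] kK wK K_def by blast
  then show False using line kb by fastforce
qed


lemma hull_point_on_line:
  fixes G0 :: "(real \<times> real) set"
  assumes "p \<in> convex hull G0" "\<forall>z\<in>G0. snd z - snd p \<ge> \<mu> * (fst z - fst p)"
  shows "\<exists>g\<in>G0. snd g - snd p = \<mu> * (fst g - fst p) \<and> fst g \<le> fst p"
    and "\<exists>g\<in>G0. snd g - snd p = \<mu> * (fst g - fst p) \<and> fst g \<ge> fst p"
proof -
  obtain S u where S: "finite S" "S \<subseteq> G0" "\<forall>x\<in>S. 0 \<le> u x" "sum u S = 1" "(\<Sum>v\<in>S. u v *\<^sub>R v) = p"
    using assms(1) unfolding convex_hull_explicit by blast
  have fp: "(\<Sum>v\<in>S. u v * fst v) = fst p" using arg_cong[OF S(5), of fst] by (simp add: fst_sum)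
  have sp: "(\<Sum>v\<in>S. u v * snd v) = snd p" using arg_cong[OF S(5), of snd] by (simp add: snd_sum)
  define D where "D v = snd v - snd p - \<mu> * (fst v - fst p)" for v
  have Dn: "\<forall>v\<in>S. 0 \<le> u v * D v"
  proof
    fix v assume v: "v \<in> S"
    then have "0 \<le> D v" using S(2) assms(2) unfolding D_def by force
    then show "0 \<le> u v * D v" using S(3) v by simp
  qed
  have "(\<Sum>v\<in>S. u v * D v) = (\<Sum>v\<in>S. u v * snd v - snd p * u v - \<mu> * (u v * fst v) + (\<mu> * fst p) * u v)"
    by (rule sum.cong) (auto simp: D_def algebra_simps)
  also have "\<dots> = (\<Sum>v\<in>S. u v * snd v) - snd p * sum u S - \<mu> * (\<Sum>v\<in>S. u v * fst v) + (\<mu> * fst p) * sum u S"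
  proof -
    have e1: "(\<Sum>v\<in>S. snd p * u v) = snd p * sum u S" by (simp add: sum_distrib_left)
    have e2: "(\<Sum>v\<in>S. \<mu> * (u v * fst v)) = \<mu> * (\<Sum>v\<in>S. u v * fst v)" by (simp add: sum_distrib_left)
    have e3: "(\<Sum>v\<in>S. (\<mu> * fst p) * u v) = (\<mu> * fst p) * sum u S" by (simp add: sum_distrib_left)
    show ?thesis by (simp only: sum.distrib sum_subtractf e1 e2 e3)
  qed
  also have "\<dots> = 0" using fp sp S(4) by simp
  finally have "(\<Sum>v\<in>S. u v * D v) = 0" .
  then have D0: "\<forall>v\<in>S. u v * D v = 0" using sum_nonneg_eq_0_iff[OF S(1), of "\<lambda>v. u v * D v"] Dn by simp
  have E0: "(\<Sum>v\<in>S. u v * (fst v - fst p)) = 0"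
  proof -
    have "(\<Sum>v\<in>S. u v * (fst v - fst p)) = (\<Sum>v\<in>S. u v * fst v - fst p * u v)"
      by (rule sum.cong) (auto simp: algebra_simps)
    also have "\<dots> = (\<Sum>v\<in>S. u v * fst v) - fst p * sum u S"
    proof -
      have e1: "(\<Sum>v\<in>S. fst p * u v) = fst p * sum u S" by (simp add: sum_distrib_left)
      show ?thesis by (simp only: sum_subtractf e1)
    qed
    finally show ?thesis using fp S(4) by simp
  qed
  obtain v0 where v0: "v0 \<in> S" "u v0 > 0"
  proof -
    have "\<exists>v\<in>S. u v \<noteq> 0"
    proof (rule ccontr)
      assume "\<not> (\<exists>v\<in>S. u v \<noteq> 0)"
      then have "sum u S = 0" by simp
      then show False using S(4) by simp
    qed
    then obtain v where "v \<in> S" "u v \<noteq> 0" by blast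
    moreover have "u v \<ge> 0" using S(3) \<open>v \<in> S\<close> by blast
    ultimately show ?thesis using that by simp
  qed
  show "\<exists>g\<in>G0. snd g - snd p = \<mu> * (fst g - fst p) \<and> fst g \<le> fst p"
  proof (rule ccontr)
    assume nt: "\<not> ?thesis"
    have pos: "\<forall>v\<in>S. u v > 0 \<longrightarrow> fst v > fst p"
    proof (intro ballI impI)
      fix v assume "v \<in> S" "u v > 0"
      then have "D v = 0" using D0 by auto
      then have "snd v - snd p = \<mu> * (fst v - fst p)" unfolding D_def by simp
      moreover have "v \<in> G0" using \<open>v \<in> S\<close> S(2) by blast
      ultimately have "\<not> (fst v \<le> fst p)" using nt by blast
      then show "fst v > fst p" by simp
    qed
    have "\<forall>v\<in>S. 0 \<le> u v * (fst v - fst p)"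
    proof
      fix v assume v: "v \<in> S"
      show "0 \<le> u v * (fst v - fst p)"
      proof (cases "u v > 0")
        case True then have "fst v > fst p" using pos v by blast
        then show ?thesis using True by simp
      next
        case False then have "u v = 0" using S(3) v by force
        then show ?thesis by simp
      qed
    qed
    then have "\<forall>v\<in>S. u v * (fst v - fst p) = 0" using sum_nonneg_eq_0_iff[OF S(1), of "\<lambda>v. u v * (fst v - fst p)"] E0 by simp
    then have "u v0 * (fst v0 - fst p) = 0" using v0(1) by blast
    moreover have "fst p < fst v0" using pos v0 by blast
    ultimately show False using v0 by simp
  qed
  show "\<exists>g\<in>G0. snd g - snd p = \<mu> * (fst g - fst p) \<and> fst g \<ge> fst p"
  proof (rule ccontr)
    assume nt: "\<not> ?thesis"
    have pos: "\<forall>v\<in>S. u v > 0 \<longrightarrow> fst v < fst p"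
    proof (intro ballI impI)
      fix v assume "v \<in> S" "u v > 0"
      then have "D v = 0" using D0 by auto
      then have "snd v - snd p = \<mu> * (fst v - fst p)" unfolding D_def by simp
      moreover have "v \<in> G0" using \<open>v \<in> S\<close> S(2) by blast
      ultimately have "\<not> (fst v \<ge> fst p)" using nt by blast
      then show "fst v < fst p" by simp
    qed
    have "\<forall>v\<in>S. 0 \<le> u v * (fst p - fst v)"
    proof
      fix v assume v: "v \<in> S"
      show "0 \<le> u v * (fst p - fst v)"
      proof (cases "u v > 0")
        case True then have "fst v < fst p" using pos v by blast
        then show ?thesis using True by simp
      next
        case False then have "u v = 0" using S(3) v by force
        then show ?thesis by simp
      qed
    qed
    moreover have "(\<Sum>v\<in>S. u v * (fst p - fst v)) = 0"
    proof -
      have "(\<Sum>v\<in>S. u v * (fst p - fst v)) = (\<Sum>v\<in>S. - (u v * (fst v - fst p)))"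
        by (rule sum.cong) (auto simp: algebra_simps)
      also have "\<dots> = - (\<Sum>v\<in>S. u v * (fst v - fst p))" by (rule sum_negf)
      finally have "(\<Sum>v\<in>S. u v * (fst p - fst v)) = - (\<Sum>v\<in>S. u v * (fst v - fst p))" .
      then show ?thesis using E0 by simp
    qed
    ultimately have "\<forall>v\<in>S. u v * (fst p - fst v) = 0" using sum_nonneg_eq_0_iff[OF S(1), of "\<lambda>v. u v * (fst p - fst v)"] by simp
    then have "u v0 * (fst p - fst v0) = 0" using v0(1) by blast
    moreover have "fst v0 < fst p" using pos v0 by blast
    ultimately show False using v0 by simp
  qed
qed




lemma val_coeff: "p \<noteq> 0 \<Longrightarrow> coeff p (val p) \<noteq> 0"
  unfolding val_def by (rule LeastI[of _ "degree p"]) simp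

lemma val_le: "coeff p j \<noteq> 0 \<Longrightarrow> val p \<le> j"
  unfolding val_def by (rule Least_le)

locale mset =
  fixes a :: "nat \<Rightarrow> 'a::field poly" and n l :: nat
  assumes l2: "l \<ge> 2" and a0: "a 0 \<noteq> 0"
begin

abbreviation "P \<equiv> PL a n l"
abbreviation "pL \<equiv> piL a n l"
abbreviation "Ps \<equiv> Psi a n l"

definition mm :: "real \<Rightarrow> real" where "mm v = Min (Psi a n l v)"

lemma PL_memD: "(x,j) \<in> P \<Longrightarrow> \<exists>i\<le>n. x = l^i \<and> coeff (a i) j \<noteq> 0"
  unfolding PL_def by auto

lemma P_finite: "finite P"
proof -
  define D where "D = Max ((\<lambda>i. degree (a i)) ` {..n})"
  have "P \<subseteq> (\<lambda>(i,j). (l^i, j)) ` ({..n} \<times> {..D})"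
  proof
    fix z assume "z \<in> P"
    then obtain i j where z: "z = (l^i, j)" "i \<le> n" "coeff (a i) j \<noteq> 0" unfolding PL_def by auto
    then have "j \<le> degree (a i)" by (simp add: le_degree)
    also have "degree (a i) \<le> D" unfolding D_def using z(2) by (intro Max_ge) auto
    finally show "z \<in> (\<lambda>(i,j). (l^i, j)) ` ({..n} \<times> {..D})" using z by force
  qed
  then show ?thesis by (rule finite_subset) auto
qed

lemma P_ne: "(1, val (a 0)) \<in> P"
  unfolding PL_def using val_coeff[OF a0] by force

lemma P_x: assumes "(x,j) \<in> P" shows "1 \<le> x" "x \<le> l^n" "real x \<ge> 1"
proof -
  obtain i where i: "i \<le> n" "x = l^i" using PL_memD[OF assms] by blast
  show "1 \<le> x" using i l2 by simp
  then show "real x \<ge> 1" by simp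
  show "x \<le> l^n" using i l2 by (simp add: power_increasing)
qed

lemma Ps_mem: "(x,j) \<in> P \<Longrightarrow> v * real x + real j \<in> Ps v"
  unfolding Psi_def by force

lemma Ps_finite: "finite (Ps v)" unfolding Psi_def using P_finite by simp

lemma Ps_ne: "Ps v \<noteq> {}" using Ps_mem[OF P_ne] by blast

lemma Ps_memE: "q \<in> Ps v \<Longrightarrow> \<exists>x j. (x,j) \<in> P \<and> q = v * real x + real j"
  unfolding Psi_def by auto

lemma mm_le: "(x,j) \<in> P \<Longrightarrow> mm v \<le> v * real x + real j"
  unfolding mm_def using Ps_mem Ps_finite by (intro Min_le) auto

lemma mm_in: "mm v \<in> Ps v"
  unfolding mm_def using Ps_finite Ps_ne by (rule Min_in)

lemma mm_att: "\<exists>X J. (X,J) \<in> P \<and> mm v = v * real X + real J"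
  using Ps_memE[OF mm_in] by blast

lemma pL_fin: "finite ((\<lambda>(x, j). (q - real j) / real x) ` P)" using P_finite by simp
lemma pL_ne: "(\<lambda>(x, j). (q - real j) / real x) ` P \<noteq> {}" using P_ne by blast

lemma pL_ge: "(x,j) \<in> P \<Longrightarrow> (q - real j) / real x \<le> pL q"
  unfolding piL_def using pL_fin by (intro Max_ge) force+

lemma pL_att: "\<exists>x j. (x,j) \<in> P \<and> pL q = (q - real j) / real x"
proof -
  have "pL q \<in> (\<lambda>(x, j). (q - real j) / real x) ` P"
    unfolding piL_def using pL_fin pL_ne by (rule Max_in)
  then show ?thesis by auto
qed

lemma pL_smono: "q < q' \<Longrightarrow> pL q < pL q'"
proof -
  assume qq: "q < q'"
  obtain x j where xj: "(x,j) \<in> P" "pL q = (q - real j) / real x" using pL_att by blast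
  have "real x \<ge> 1" using P_x(3)[OF xj(1)] .
  then have "(q - real j) / real x < (q' - real j) / real x" using qq by (simp add: divide_strict_right_mono)
  also have "\<dots> \<le> pL q'" using pL_ge[OF xj(1)] .
  finally show ?thesis using xj(2) by simp
qed

lemma pL_mono: "q \<le> q' \<Longrightarrow> pL q \<le> pL q'"
  using pL_smono by (cases "q = q'") (auto simp: order_le_less)

lemma pL_mm: "pL (mm v) = v"
proof (rule antisym)
  obtain x j where xj: "(x,j) \<in> P" "pL (mm v) = (mm v - real j) / real x" using pL_att by blast
  have x1: "real x \<ge> 1" using P_x(3)[OF xj(1)] .
  have "mm v - real j \<le> v * real x" using mm_le[OF xj(1), of v] by simp
  then show "pL (mm v) \<le> v" using xj(2) x1 by (simp add: divide_le_eq)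
next
  obtain X J where XJ: "(X,J) \<in> P" "mm v = v * real X + real J" using mm_att by blast
  have "real X \<ge> 1" using P_x(3)[OF XJ(1)] .
  then have "v = (mm v - real J) / real X" using XJ(2) by simp
  also have "\<dots> \<le> pL (mm v)" using pL_ge[OF XJ(1)] .
  finally show "v \<le> pL (mm v)" .
qed

lemma pL_eq: "pL q = w \<longleftrightarrow> q = mm w"
proof
  assume "pL q = w"
  show "q = mm w"
  proof (rule ccontr)
    assume "q \<noteq> mm w"
    then have "q < mm w \<or> mm w < q" by linarith
    then have "pL q \<noteq> pL (mm w)" using pL_smono by (metis order_less_irrefl)
    then show False using \<open>pL q = w\<close> pL_mm by simp
  qed
qed (simp add: pL_mm)

lemma mm_le_Ps: "q \<in> Ps v \<Longrightarrow> mm v \<le> q"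
  using Ps_memE mm_le by blast

lemma pL_Ps_ge: "q \<in> Ps v \<Longrightarrow> v \<le> pL q"
  using pL_mono[OF mm_le_Ps] pL_mm by metis

definition G :: "nat \<times> nat \<Rightarrow> real \<Rightarrow> real" where
  "G p y = pL (y * real (fst p) + real (snd p))"

lemma G_mono: "mono (G p)"
proof (rule monoI)
  fix y y' :: real assume "y \<le> y'"
  have "real (fst p) \<ge> 0" by simp
  then have "y * real (fst p) + real (snd p) \<le> y' * real (fst p) + real (snd p)"
    using \<open>y \<le> y'\<close> by (simp add: mult_right_mono)
  then show "G p y \<le> G p y'" unfolding G_def by (rule pL_mono)
qed

lemma G_exp: "p \<in> P \<Longrightarrow> y \<le> G p y"
  unfolding G_def using pL_Ps_ge[OF Ps_mem] by (cases p) auto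

lemma Vseq_closure:
  "Vseq a n l i \<subseteq> {foldr G ws s | ws s. set ws \<subseteq> P \<and> s \<in> uminus ` slopes a n l}"
proof (induction i)
  case 0
  show ?case by (auto intro!: exI[of _ "[]"])
next
  case (Suc i)
  show ?case
  proof
    fix w assume "w \<in> Vseq a n l (Suc i)"
    then obtain v q where vq: "v \<in> Vseq a n l i" "q \<in> Ps v" "w = pL q" by auto
    obtain x j where xj: "(x,j) \<in> P" "q = v * real x + real j" using Ps_memE[OF vq(2)] by blast
    obtain ws s where wss: "v = foldr G ws s" "set ws \<subseteq> P" "s \<in> uminus ` slopes a n l"
      using Suc vq(1) by blast
    have "w = foldr G ((x,j) # ws) s" using vq(3) xj(2) wss(1) unfolding G_def by simp
    then show "w \<in> {foldr G ws s | ws s. set ws \<subseteq> P \<and> s \<in> uminus ` slopes a n l}"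
      using xj(1) wss(2,3) by fastforce
  qed
qed

lemma V_wo:
  assumes "finite (slopes a n l)" "W \<subseteq> Vset a n l" "W \<noteq> {}"
  shows "\<exists>w\<in>W. \<forall>w'\<in>W. w \<le> w'"
proof (rule wo_closure_min[OF P_finite _ _ _ _ assms(3), of "uminus ` slopes a n l" G])
  show "finite (uminus ` slopes a n l)" using assms(1) by simp
  show "\<forall>p\<in>P. mono (G p)" using G_mono by blast
  show "\<forall>p\<in>P. \<forall>y. y \<le> G p y" using G_exp by blast
  show "W \<subseteq> {foldr G ws s | ws s. set ws \<subseteq> P \<and> s \<in> uminus ` slopes a n l}"
    using assms(2) Vseq_closure unfolding Vset_def by blast
qed

end



context mset begin

definition G0 :: "(real \<times> real) set" where
  "G0 = {(real (l ^ i), y) | i y. i \<le> n \<and> a i \<noteq> 0 \<and> y \<ge> real (val (a i))}"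

lemma NP_eq: "newton_polygon a n l = convex hull G0"
  unfolding newton_polygon_def G0_def by simp

lemma G0_up: "z \<in> G0 \<Longrightarrow> t \<ge> 0 \<Longrightarrow> z + (0,t) \<in> G0"
  unfolding G0_def by force

lemma G0_memE:
  assumes "z \<in> G0"
  obtains i where "i \<le> n" "a i \<noteq> 0" "fst z = real (l^i)" "snd z \<ge> real (val (a i))"
    "(l^i, val (a i)) \<in> P" "(real (l^i), real (val (a i))) \<in> G0"
proof -
  obtain i y where z: "z = (real (l ^ i), y)" "i \<le> n" "a i \<noteq> 0" "y \<ge> real (val (a i))"
    using assms unfolding G0_def by blast
  have "(l^i, val (a i)) \<in> P" unfolding PL_def using z val_coeff by blast
  moreover have "(real (l^i), real (val (a i))) \<in> G0" unfolding G0_def using z by blast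
  ultimately show ?thesis using that z by simp
qed

lemma P_G0: "(x,j) \<in> P \<Longrightarrow> (real x, real j) \<in> G0"
proof -
  assume "(x,j) \<in> P"
  then obtain i where i: "i \<le> n" "x = l^i" "coeff (a i) j \<noteq> 0" using PL_memD by blast
  then have "a i \<noteq> 0" by auto
  moreover have "val (a i) \<le> j" using val_le[OF i(3)] .
  ultimately show ?thesis unfolding G0_def using i by force
qed

lemma slopes_subset:
  "slopes a n l \<subseteq> (\<lambda>((x,j),(x',j')). (real j' - real j) / (real x' - real x)) ` (P \<times> P)"
proof
  fix \<mu> assume "\<mu> \<in> slopes a n l"
  then obtain F p0 q0 where F: "F face_of convex hull G0" "aff_dim F = 1" "p0 \<in> F" "q0 \<in> F"
    "fst p0 \<noteq> fst q0" "\<mu> = (snd q0 - snd p0) / (fst q0 - fst p0)"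
    unfolding slopes_def NP_eq by blast
  obtain p q where pq: "p \<in> F" "q \<in> F" "fst p < fst q" "\<mu> = (snd q - snd p) / (fst q - fst p)"
  proof (cases "fst p0 < fst q0")
    case True then show ?thesis using that F by blast
  next
    case False
    then have "fst q0 < fst p0" using F(5) by simp
    moreover have "\<mu> = (snd p0 - snd q0) / (fst p0 - fst q0)" using F(6)
      by (metis minus_diff_eq minus_divide_divide)
    ultimately show ?thesis using that F by blast
  qed
  have col: "collinear F" using F(2) by (simp add: collinear_aff_dim)
  have FK: "F \<subseteq> convex hull G0" using F(1) face_of_imp_subset by blast
  have above: "\<forall>z\<in>G0. snd z - snd p \<ge> \<mu> * (fst z - fst p)"
  proof
    fix z assume "z \<in> G0"
    then have "z \<in> convex hull G0" by (simp add: hull_inc)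
    then show "snd z - snd p \<ge> \<mu> * (fst z - fst p)"
      using face_above_line[OF G0_up F(1) col pq(1,2,3)] pq(4) by simp
  qed
  have qline: "snd q - snd p = \<mu> * (fst q - fst p)" using pq by simp
  have aboveq: "\<forall>z\<in>G0. snd z - snd q \<ge> \<mu> * (fst z - fst q)"
  proof
    fix z assume "z \<in> G0"
    then have "snd z - snd p \<ge> \<mu> * (fst z - fst p)" using above by blast
    then show "snd z - snd q \<ge> \<mu> * (fst z - fst q)" using qline by (simp add: algebra_simps)
  qed
  obtain g where g: "g \<in> G0" "snd g - snd p = \<mu> * (fst g - fst p)" "fst g \<le> fst p"
    using hull_point_on_line(1)[OF _ above] FK pq(1) by blast
  obtain g' where g': "g' \<in> G0" "snd g' - snd q = \<mu> * (fst g' - fst q)" "fst g' \<ge> fst q"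
    using hull_point_on_line(2)[OF _ aboveq] FK pq(2) by blast
  have g'l: "snd g' - snd p = \<mu> * (fst g' - fst p)" using g'(2) qline by (simp add: algebra_simps)
  obtain i where i: "fst g = real (l^i)" "(l^i, val (a i)) \<in> P" "(real (l^i), real (val (a i))) \<in> G0"
    "snd g \<ge> real (val (a i))" using G0_memE[OF g(1)] by metis
  obtain i' where i': "fst g' = real (l^i')" "(l^i', val (a i')) \<in> P" "(real (l^i'), real (val (a i'))) \<in> G0"
    "snd g' \<ge> real (val (a i'))" using G0_memE[OF g'(1)] by metis
  have "real (val (a i)) - snd p \<ge> \<mu> * (real (l^i) - fst p)" using above i(3) by fastforce
  then have sg: "snd g = real (val (a i))" using g(2) i(1,4) by simp
  have "real (val (a i')) - snd p \<ge> \<mu> * (real (l^i') - fst p)" using above i'(3) by fastforce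
  then have sg': "snd g' = real (val (a i'))" using g'l i'(1,4) by simp
  have lt: "fst g < fst g'" using g(3) g'(3) pq(3) by simp
  have "\<mu> = (snd g' - snd g) / (fst g' - fst g)"
  proof -
    have "snd g' - snd g = \<mu> * (fst g' - fst g)" using g(2) g'l by (simp add: algebra_simps)
    then show ?thesis using lt by simp
  qed
  then have "\<mu> = (real (val (a i')) - real (val (a i))) / (real (l^i') - real (l^i))"
    using sg sg' i(1) i'(1) by simp
  then show "\<mu> \<in> (\<lambda>((x,j),(x',j')). (real j' - real j) / (real x' - real x)) ` (P \<times> P)"
    using i(2) i'(2) by force
qed

lemma slopes_finite: "finite (slopes a n l)"
  by (rule finite_subset[OF slopes_subset]) (simp add: P_finite)

lemma slope_construct:
  assumes XJ: "(X,J) \<in> P" and x1: "(x1,j1) \<in> P" "X < x1"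
    and sup: "\<forall>(x,j)\<in>P. real j - real J \<ge> \<mu> * (real x - real X)"
    and mu: "\<mu> = (real j1 - real J) / (real x1 - real X)"
  shows "\<mu> \<in> slopes a n l"
proof -
  define c :: "real \<times> real" where "c = (\<mu>, -1)"
  define b where "b = \<mu> * real X - real J"
  have le: "c \<bullet> z \<le> b" if zG: "z \<in> G0" for z
  proof -
    obtain i where i: "fst z = real (l^i)" "(l^i, val (a i)) \<in> P" "snd z \<ge> real (val (a i))"
      using G0_memE[OF zG] by metis
    have "real (val (a i)) - real J \<ge> \<mu> * (real (l^i) - real X)" using sup i(2) by fastforce
    then show ?thesis using i unfolding c_def b_def by (simp add: inner_prod_def algebra_simps)
  qed
  have KH: "convex hull G0 \<subseteq> {z. c \<bullet> z \<le> b}"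
    by (rule hull_minimal) (use le convex_halfspace_le in auto)
  define F where "F = convex hull G0 \<inter> {z. c \<bullet> z = b}"
  have Fface: "F face_of convex hull G0" unfolding F_def
    by (rule face_of_Int_supporting_hyperplane_le) (use KH in auto)
  have p1: "(real X, real J) \<in> F" unfolding F_def using P_G0[OF XJ]
    by (simp add: hull_inc c_def b_def inner_prod_def)
  have xX: "real x1 - real X \<noteq> 0" using x1(2) by simp
  have "real j1 - real J = \<mu> * (real x1 - real X)" using mu xX by simp
  then have p2: "(real x1, real j1) \<in> F" unfolding F_def using P_G0[OF x1(1)]
    by (simp add: hull_inc c_def b_def inner_prod_def algebra_simps)
  have "aff_dim F \<le> aff_dim {z. c \<bullet> z = b}" unfolding F_def by (rule aff_dim_subset) auto
  also have "\<dots> = 1" by (subst aff_dim_hyperplane) (auto simp: c_def zero_prod_def)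
  finally have d1: "aff_dim F \<le> 1" .
  have "aff_dim {(real X, real J), (real x1, real j1)} \<le> aff_dim F"
    by (rule aff_dim_subset) (use p1 p2 in auto)
  moreover have "aff_dim {(real X, real J), (real x1, real j1)} = 1" using x1(2) by simp
  ultimately have "aff_dim F = 1" using d1 by simp
  then show ?thesis unfolding slopes_def NP_eq
    using Fface p1 p2 mu x1(2) by (intro CollectI exI[of _ F] exI[of _ "(real X, real J)"] exI[of _ "(real x1, real j1)"]) auto
qed

end



locale mset2 = mset a n l for a :: "nat \<Rightarrow> 'a::field poly" and n l +
  fixes d :: nat
  assumes d1: "d \<ge> 1" and dS: "\<forall>\<mu>\<in>slopes a n l. real d * \<mu> \<in> \<int>"
begin

abbreviation "V \<equiv> Vset a n l"
abbreviation "S \<equiv> slopes a n l"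

lemma Vseq_V: "Vseq a n l i \<subseteq> V" unfolding Vset_def by blast

lemma V_step: "v \<in> V \<Longrightarrow> q \<in> Ps v \<Longrightarrow> pL q \<in> V"
proof -
  assume "v \<in> V" "q \<in> Ps v"
  then obtain i where "v \<in> Vseq a n l i" unfolding Vset_def by blast
  then have "pL q \<in> Vseq a n l (Suc i)" using \<open>q \<in> Ps v\<close> by auto
  then show ?thesis unfolding Vset_def by blast
qed

lemma S_V: "\<mu> \<in> S \<Longrightarrow> -\<mu> \<in> V"
  using Vseq_V[of 0] by auto

lemma V_ge: assumes "S \<noteq> {}" shows "v \<in> V \<Longrightarrow> -Max S \<le> v"
proof -
  have "\<forall>v\<in>Vseq a n l i. -Max S \<le> v" for i
  proof (induction i)
    case 0
    show ?case using slopes_finite by auto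
  next
    case (Suc i)
    show ?case
    proof
      fix w assume "w \<in> Vseq a n l (Suc i)"
      then obtain v q where "v \<in> Vseq a n l i" "q \<in> Ps v" "w = pL q" by auto
      then show "-Max S \<le> w" using Suc pL_Ps_ge by fastforce
    qed
  qed
  then show "v \<in> V \<Longrightarrow> -Max S \<le> v" unfolding Vset_def by blast
qed

lemma int_up: "real d * real l ^ h * v \<in> \<int> \<Longrightarrow> h \<le> h' \<Longrightarrow> real d * real l ^ h' * v \<in> \<int>"
proof -
  assume h: "real d * real l ^ h * v \<in> \<int>" "h \<le> h'"
  have e: "real l ^ h' = real l ^ (h' - h) * real l ^ h"
    using h(2) by (metis le_add_diff_inverse2 power_add)
  have "real d * real l ^ h' * v = real l ^ (h' - h) * (real d * real l ^ h * v)"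
    by (simp only: e mult_ac)
  also have "\<dots> \<in> \<int>" by (rule Ints_mult[OF _ h(1)]) simp
  finally show ?thesis .
qed

lemma V_int: "v \<in> V \<Longrightarrow> \<exists>h. real d * real l ^ h * v \<in> \<int>"
proof -
  have "\<forall>v\<in>Vseq a n l i. \<exists>h. real d * real l ^ h * v \<in> \<int>" for i
  proof (induction i)
    case 0
    show ?case
    proof
      fix v assume "v \<in> Vseq a n l 0"
      then obtain \<mu> where "\<mu> \<in> S" "v = -\<mu>" by auto
      then have "real d * real l ^ 0 * v \<in> \<int>" using dS by simp
      then show "\<exists>h. real d * real l ^ h * v \<in> \<int>" by blast
    qed
  next
    case (Suc i)
    show ?case
    proof
      fix w assume "w \<in> Vseq a n l (Suc i)"
      then obtain v q where vq: "v \<in> Vseq a n l i" "q \<in> Ps v" "w = pL q" by auto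
      obtain h where h: "real d * real l ^ h * v \<in> \<int>" using Suc vq(1) by blast
      obtain x j where xj: "(x,j) \<in> P" "q = v * real x + real j" using Ps_memE[OF vq(2)] by blast
      obtain x' j' where xj': "(x',j') \<in> P" "pL q = (q - real j') / real x'" using pL_att by blast
      obtain i' where i': "i' \<le> n" "x' = l^i'" using PL_memD[OF xj'(1)] by blast
      have l0: "real l ^ i' \<noteq> 0" using l2 by simp
      have "h + n = (n - i') + h + i'" using i'(1) by simp
      then have pw: "real l ^ (h + n) = real l ^ (n - i') * real l ^ h * real l ^ i'"
        by (metis power_add)
      have "real d * real l ^ (h + n) * w =
            real l ^ (n - i') * (real x * (real d * real l ^ h * v) + real d * real l ^ h * (real j - real j'))"
      proof -
        have wq: "w = (v * real x + real j - real j') / real l ^ i'" using vq(3) xj'(2) xj(2) i'(2) by simp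
        show ?thesis unfolding wq pw using l0 by (simp add: field_simps)
      qed
      also have "\<dots> \<in> \<int>"
      proof -
        have a1: "real x * (real d * real l ^ h * v) \<in> \<int>" by (rule Ints_mult[OF _ h]) simp
        have a2: "real d * real l ^ h * (real j - real j') \<in> \<int>" by (intro Ints_mult Ints_diff) auto
        show ?thesis by (rule Ints_mult[OF _ Ints_add[OF a1 a2]]) simp
      qed
      finally show "\<exists>h. real d * real l ^ h * w \<in> \<int>" by blast
    qed
  qed
  then show "v \<in> V \<Longrightarrow> \<exists>h. real d * real l ^ h * v \<in> \<int>" unfolding Vset_def by blast
qed

definition ex :: "real \<Rightarrow> nat" where "ex v = (LEAST h. real d * real l ^ h * v \<in> \<int>)"

lemma ex_int: "v \<in> V \<Longrightarrow> real d * real l ^ ex v * v \<in> \<int>"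
proof -
  assume "v \<in> V"
  then obtain h where "real d * real l ^ h * v \<in> \<int>" using V_int by blast
  then show ?thesis unfolding ex_def by (rule LeastI)
qed

lemma ex_le: "real d * real l ^ h * v \<in> \<int> \<Longrightarrow> ex v \<le> h"
  unfolding ex_def by (rule Least_le)

lemma K1:
  assumes "v \<in> V" "w \<in> V" "v < w"
  shows "w - v \<ge> 1 / (real d * real l ^ max (ex v) (ex w))"
proof -
  define M where "M = max (ex v) (ex w)"
  have iv: "real d * real l ^ M * v \<in> \<int>" using int_up[OF ex_int[OF assms(1)]] M_def by simp
  have iw: "real d * real l ^ M * w \<in> \<int>" using int_up[OF ex_int[OF assms(2)]] M_def by simp
  have pos: "real d * real l ^ M > 0" using d1 l2 by simp
  have "real d * real l ^ M * w - real d * real l ^ M * v \<in> \<int>" using iv iw by (rule Ints_diff[rotated])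
  moreover have "real d * real l ^ M * w - real d * real l ^ M * v > 0"
    using mult_strict_left_mono[OF assms(3) pos] by simp
  ultimately have "real d * real l ^ M * w - real d * real l ^ M * v \<ge> 1"
  proof -
    assume a: "real d * real l ^ M * w - real d * real l ^ M * v \<in> \<int>"
      "real d * real l ^ M * w - real d * real l ^ M * v > 0"
    then obtain k :: int where k: "real d * real l ^ M * w - real d * real l ^ M * v = of_int k"
      by (auto elim: Ints_cases)
    then have "k > 0" using a(2) by simp
    then have "of_int k \<ge> (1::real)" by simp
    then show ?thesis using k by simp
  qed
  then have "real d * real l ^ M * (w - v) \<ge> 1" by (simp add: algebra_simps)
  then show ?thesis unfolding M_def[symmetric] using pos by (simp add: divide_le_eq mult.commute)
qed

lemma K2:
  assumes "w \<in> V" "(l^I, J) \<in> P" "mm w = w * real (l^I) + real J" "(l^i, j) \<in> P"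
  shows "ex ((mm w - real j) / real (l^i)) \<le> (ex w - I) + i"
proof (rule ex_le)
  define h where "h = (ex w - I) + i"
  have l0: "real l ^ i \<noteq> 0" using l2 by simp
  have pw: "real l ^ h = real l ^ (ex w - I) * real l ^ i" unfolding h_def by (simp add: power_add)
  have iw: "real d * real l ^ ((ex w - I) + I) * w \<in> \<int>"
    using int_up[OF ex_int[OF assms(1)]] by simp
  have "real d * real l ^ h * ((mm w - real j) / real (l^i)) =
        real d * real l ^ ((ex w - I) + I) * w + real d * real l ^ (ex w - I) * (real J - real j)"
  proof -
    have e2: "real l ^ ((ex w - I) + I) = real l ^ (ex w - I) * real l ^ I" by (simp add: power_add)
    show ?thesis unfolding assms(3) pw e2 of_nat_power using l0 by (simp add: field_simps)
  qed
  also have "\<dots> \<in> \<int>" by (rule Ints_add[OF iw]) (intro Ints_mult, auto)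
  finally show "real d * real l ^ ((ex w - I) + i) * ((mm w - real j) / real (l^i)) \<in> \<int>"
    unfolding h_def .
qed


lemma eps_min:
  assumes "\<mu> \<in> S" "\<exists>w\<in>V. w > -\<mu>"
  shows "\<exists>z0. z0 \<in> V \<and> z0 > -\<mu> \<and> (\<forall>w\<in>V. w > -\<mu> \<longrightarrow> z0 \<le> w) \<and> eps a n l (-\<mu>) = ereal (z0 + \<mu>)"
proof -
  obtain z0 where z0: "z0 \<in> {w\<in>V. w > -\<mu>}" "\<forall>w'\<in>{w\<in>V. w > -\<mu>}. z0 \<le> w'"
    using V_wo[OF slopes_finite, of "{w\<in>V. w > -\<mu>}"] assms(2) by blast
  have "(LEAST w. w \<in> V \<and> w > -\<mu>) = z0"
    by (rule Least_equality) (use z0 in auto)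
  then have "eps a n l (-\<mu>) = ereal (z0 + \<mu>)" unfolding eps_def using assms(2) by simp
  then show ?thesis using z0 by auto
qed

definition \<delta>0 where "\<delta>0 = 1 / (real d * real l ^ n)"

lemma tau_props:
  shows "0 < tau a n l d" "tau a n l d \<le> \<delta>0"
    "\<And>\<mu> w. \<mu> \<in> S \<Longrightarrow> w \<in> V \<Longrightarrow> w > -\<mu> \<Longrightarrow> w \<ge> -\<mu> + tau a n l d"
proof -
  define Ms where "Ms = {ereal \<delta>0} \<union> (\<lambda>\<mu>. eps a n l (- \<mu>)) ` S"
  have fin: "finite Ms" unfolding Ms_def using slopes_finite by simp
  have ne: "Ms \<noteq> {}" unfolding Ms_def by simp
  have d0: "\<delta>0 > 0" unfolding \<delta>0_def using d1 l2 by simp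
  have pos: "\<forall>e\<in>Ms. e > 0"
  proof
    fix e assume "e \<in> Ms"
    then consider "e = ereal \<delta>0" | \<mu> where "\<mu> \<in> S" "e = eps a n l (-\<mu>)" unfolding Ms_def by blast
    then show "e > 0"
    proof cases
      case 1 then show ?thesis using d0 by simp
    next
      case 2
      show ?thesis
      proof (cases "\<exists>w\<in>V. w > -\<mu>")
        case True
        then obtain z0 where "z0 > -\<mu>" "eps a n l (-\<mu>) = ereal (z0 + \<mu>)" using eps_min[OF 2(1)] by blast
        then show ?thesis using 2(2) by simp
      next
        case False
        then show ?thesis using 2(2) unfolding eps_def by simp
      qed
    qed
  qed
  have minpos: "Min Ms > 0" using pos fin ne by simp
  have minle: "Min Ms \<le> ereal \<delta>0" using fin unfolding Ms_def by (intro Min_le) auto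
  obtain r where r: "Min Ms = ereal r"
    using minpos minle by (cases "Min Ms") auto
  have tr: "tau a n l d = r" unfolding tau_def \<delta>0_def[symmetric] Ms_def[symmetric] using r by simp
  show "0 < tau a n l d" using minpos r tr by simp
  show "tau a n l d \<le> \<delta>0" using minle r tr by simp
  fix \<mu> w assume mw: "\<mu> \<in> S" "w \<in> V" "w > -\<mu>"
  then obtain z0 where z0: "z0 \<in> V" "(\<forall>w\<in>V. w > -\<mu> \<longrightarrow> z0 \<le> w)" "eps a n l (-\<mu>) = ereal (z0 + \<mu>)"
    using eps_min[OF mw(1)] by blast
  have "Min Ms \<le> eps a n l (-\<mu>)" using fin mw(1) unfolding Ms_def by (intro Min_le) auto
  then have "r \<le> z0 + \<mu>" using r z0(3) by simp
  moreover have "z0 \<le> w" using z0(2) mw by blast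
  ultimately show "w \<ge> -\<mu> + tau a n l d" using tr by simp
qed

end



context mset2 begin

lemma rightmost_min:
  obtains X J I where "(X,J) \<in> P" "mm w = w * real X + real J" "X = l^I" "I \<le> n"
    "\<And>x' j'. (x',j') \<in> P \<Longrightarrow> X < x' \<Longrightarrow> mm w < w * real x' + real j'"
proof -
  define Mn where "Mn = {p \<in> P. mm w = w * real (fst p) + real (snd p)}"
  have fin: "finite Mn" unfolding Mn_def using P_finite by simp
  have ne: "Mn \<noteq> {}" unfolding Mn_def using mm_att by force
  define Xm where "Xm = Max (fst ` Mn)"
  have "Xm \<in> fst ` Mn" unfolding Xm_def using fin ne by (intro Max_in) auto
  then obtain J where XJ: "(Xm, J) \<in> Mn" by force
  then have XJP: "(Xm, J) \<in> P" "mm w = w * real Xm + real J" unfolding Mn_def by auto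
  obtain I where I: "I \<le> n" "Xm = l^I" using PL_memD[OF XJP(1)] by blast
  have right: "mm w < w * real x' + real j'" if "(x',j') \<in> P" "Xm < x'" for x' j'
  proof -
    have le: "mm w \<le> w * real x' + real j'" using mm_le[OF that(1)] .
    show ?thesis
    proof (rule ccontr)
      assume "\<not> ?thesis"
      then have "(x',j') \<in> Mn" using le that(1) unfolding Mn_def by simp
      then have "x' \<in> fst ` Mn" by force
      then have "x' \<le> Xm" unfolding Xm_def using fin by simp
      then show False using that(2) by simp
    qed
  qed
  show ?thesis using that[OF XJP I(2,1) right] by blast
qed

lemma key:
  assumes wV: "w \<in> V" and vV: "v \<in> V" and vw: "v < w" and xj: "(x,j) \<in> P"
    and eq: "mm w = v * real x + real j" and small: "w - v < tau a n l d"
  shows "ex v < ex w"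
proof (rule ccontr)
  assume "\<not> ex v < ex w"
  then have ge: "ex w \<le> ex v" by simp
  define \<tau> where "\<tau> = tau a n l d"
  have tp: "0 < \<tau>" "\<tau> \<le> \<delta>0" unfolding \<tau>_def using tau_props by auto
  have T2: "\<And>\<mu> u. \<mu> \<in> S \<Longrightarrow> u \<in> V \<Longrightarrow> u > -\<mu> \<Longrightarrow> u \<ge> -\<mu> + \<tau>"
    unfolding \<tau>_def using tau_props(3) by blast
  obtain i where i: "i \<le> n" "x = l^i" using PL_memD[OF xj] by blast
  obtain X J I where XJ: "(X,J) \<in> P" "mm w = w * real X + real J" "X = l^I" "I \<le> n"
    and right: "\<And>x' j'. (x',j') \<in> P \<Longrightarrow> X < x' \<Longrightarrow> mm w < w * real x' + real j'"
    using rightmost_min by blast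
  have x1: "real x \<ge> 1" using P_x(3)[OF xj] .
  have X1: "real X \<ge> 1" using P_x(3)[OF XJ(1)] .
  have ln: "real l ^ n \<ge> 1" using l2 by simp
  have dpos: "real d \<ge> 1" using d1 by simp
  have "v = (mm w - real j) / real x" using eq x1 by (simp add: field_simps)
  then have vform: "v = (mm w - real j) / real (l^i)" using i(2) by simp
  have exn: "ex v > n"
  proof (rule ccontr)
    assume "\<not> ex v > n"
    then have "ex v \<le> n" by simp
    have "w - v \<ge> 1 / (real d * real l ^ max (ex v) (ex w))" using K1[OF vV wV vw] .
    moreover have "max (ex v) (ex w) = ex v" using ge by simp
    moreover have "real l ^ ex v \<le> real l ^ n" using \<open>ex v \<le> n\<close> l2 by (simp add: power_increasing)
    then have "1 / (real d * real l ^ n) \<le> 1 / (real d * real l ^ ex v)"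
      using dpos l2 by (intro divide_left_mono mult_left_mono) auto
    ultimately have "w - v \<ge> \<delta>0" unfolding \<delta>0_def by simp
    then show False using small tp unfolding \<tau>_def by simp
  qed
  have K2': "ex v \<le> (ex w - I) + i"
    using K2[OF wV XJ(1)[unfolded XJ(3)] XJ(2)[unfolded XJ(3)] xj[unfolded i(2)]] vform by simp
  have IwI: "I < ex w"
  proof (rule ccontr)
    assume "\<not> I < ex w"
    then have "ex v \<le> i" using K2' by simp
    then show False using exn i(1) by simp
  qed
  have iI: "I \<le> i" using K2' IwI ge by simp
  show False
  proof (cases "i = I")
    case True
    then have xX: "x = X" using i(2) XJ(3) by simp
    have "(w - v) * real X = real j - real J" using XJ(2) eq xX by (simp add: algebra_simps)
    moreover have "(w - v) * real X > 0" using vw X1 by simp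
    ultimately have "j > J" by simp
    then have "real j - real J \<ge> 1" by simp
    then have "(w - v) * real X \<ge> 1" using \<open>(w - v) * real X = real j - real J\<close> by simp
    moreover have "real X \<le> real l ^ n" using P_x(2)[OF XJ(1)] by (metis of_nat_le_iff of_nat_power)
    moreover have "real l ^ n \<le> real d * real l ^ n" using mult_right_mono[OF dpos, of "real l ^ n"] ln by simp
    ultimately have "real X \<le> real d * real l ^ n" by linarith
    then have "(w - v) * real X \<le> (w - v) * (real d * real l ^ n)" using vw by (simp add: mult_left_mono)
    then have "(w - v) * (real d * real l ^ n) \<ge> 1" using \<open>(w - v) * real X \<ge> 1\<close> by linarith
    moreover have Dp: "real d * real l ^ n > 0" by (intro mult_pos_pos) (use d1 l2 in auto)
    ultimately have "w - v \<ge> \<delta>0" unfolding \<delta>0_def by (simp add: divide_le_eq)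
    then show False using small tp unfolding \<tau>_def by simp
  next
    case False
    then have iI': "I < i" using iI by simp
    have Xx: "X < x" using iI' l2 i(2) XJ(3) by (simp add: power_strict_increasing)
    have X2: "2 * real X \<le> real x"
    proof -
      have "l ^ Suc I \<le> l ^ i" using iI' l2 by (intro power_increasing) auto
      moreover have "2 * l ^ I \<le> l * l ^ I" using l2 by (intro mult_right_mono) auto
      ultimately have "2 * l ^ I \<le> l ^ i" by (metis power_Suc order_trans)
      then have "real (2 * l ^ I) \<le> real (l ^ i)" by (simp only: of_nat_le_iff)
      then show ?thesis using i(2) XJ(3) by simp
    qed
    define Q where "Q = {p \<in> P. X < fst p}"
    define sl where "sl p = (real (snd p) - real J) / (real (fst p) - real X)" for p :: "nat \<times> nat"
    have Qfin: "finite Q" unfolding Q_def using P_finite by simp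
    have xQ: "(x,j) \<in> Q" unfolding Q_def using xj Xx by simp
    define \<mu> where "\<mu> = Min (sl ` Q)"
    have "\<mu> \<in> sl ` Q" unfolding \<mu>_def using Qfin xQ by (intro Min_in) auto
    then obtain x1 j1 where x1j1: "(x1,j1) \<in> Q" "\<mu> = sl (x1,j1)" by auto
    have x1P: "(x1,j1) \<in> P" "X < x1" using x1j1(1) unfolding Q_def by auto
    have muQ: "\<mu> \<le> sl p" if "p \<in> Q" for p unfolding \<mu>_def using Qfin that by simp
    have mw: "\<mu> > -w"
    proof -
      have "mm w < w * real x1 + real j1" using right[OF x1P] .
      then have a: "real j1 - real J > -w * (real x1 - real X)" using XJ(2) by (simp add: algebra_simps)
      have b: "real x1 - real X > 0" using x1P(2) by simp
      have "-w < (real j1 - real J) / (real x1 - real X)"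
        by (subst pos_less_divide_eq[OF b]) (use a in simp)
      then show ?thesis using x1j1(2) unfolding sl_def by simp
    qed
    have sup: "\<forall>(x',j')\<in>P. real j' - real J \<ge> \<mu> * (real x' - real X)"
    proof (intro ballI, clarify)
      fix x' j' assume p: "(x',j') \<in> P"
      have mmle: "w * real X + real J \<le> w * real x' + real j'" using mm_le[OF p, of w] XJ(2) by simp
      consider "X < x'" | "x' = X" | "x' < X" by linarith
      then show "real j' - real J \<ge> \<mu> * (real x' - real X)"
      proof cases
        case 1
        then have "(x',j') \<in> Q" unfolding Q_def using p by simp
        then have "\<mu> \<le> (real j' - real J) / (real x' - real X)" using muQ unfolding sl_def by fastforce
        moreover have "real x' - real X > 0" using 1 by simp
        ultimately show ?thesis by (simp add: le_divide_eq)
      next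
        case 2 then show ?thesis using mmle by simp
      next
        case 3
        then have pos: "real X - real x' > 0" by simp
        have "- \<mu> < w" using mw by simp
        then have "- \<mu> * (real X - real x') < w * (real X - real x')" using pos by (rule mult_strict_right_mono)
        then show ?thesis using mmle by (simp add: algebra_simps)
      qed
    qed
    have muS: "\<mu> \<in> S"
      using slope_construct[OF XJ(1) x1P sup] x1j1(2) unfolding sl_def by simp
    have wge: "w \<ge> -\<mu> + \<tau>" using T2[OF muS wV] mw by simp
    show False
    proof (cases "v \<le> -\<mu>")
      case True
      then show False using wge small unfolding \<tau>_def by simp
    next
      case False
      then have vge: "v \<ge> -\<mu> + \<tau>" using T2[OF muS vV] by simp
      have "\<mu> \<le> sl (x,j)" using muQ xQ by simp
      then have mxj: "\<mu> * (real x - real X) \<le> real j - real J"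
        unfolding sl_def using Xx by (simp add: le_divide_eq)
      have id: "real X * (w - v) = v * (real x - real X) + (real j - real J)"
        using XJ(2) eq by (simp add: algebra_simps)
      have "v * (real x - real X) \<ge> (-\<mu> + \<tau>) * (real x - real X)"
        using vge Xx by (simp add: mult_right_mono)
      then have "real X * (w - v) \<ge> \<tau> * (real x - real X)" using id mxj by (simp add: algebra_simps)
      moreover have "\<tau> * (real x - real X) \<ge> \<tau> * real X" using X2 tp by simp
      ultimately have "real X * (w - v) \<ge> real X * \<tau>" by (simp add: mult.commute)
      then have "w - v \<ge> \<tau>" using X1 by simp
      then show False using small unfolding \<tau>_def by simp
    qed
  qed
qed

end



context mset2 begin

abbreviation "R E i \<equiv> Rseq a n l E i"

lemma R_V: "E \<subseteq> V \<Longrightarrow> R E i \<subseteq> V"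
proof (cases i)
  case 0
  assume "E \<subseteq> V"
  then show ?thesis using 0 S_V by auto
next
  case (Suc k)
  then show ?thesis by auto
qed

lemma R_step: "E \<subseteq> V \<Longrightarrow> R E i \<subseteq> R E (Suc i)"
proof
  fix v assume EV: "E \<subseteq> V" and v: "v \<in> R E i"
  have vV: "v \<in> V" using R_V[OF EV] v by blast
  have "v \<in> pL ` Ps v" by (rule image_eqI[where x="mm v"]) (simp_all add: pL_mm mm_in)
  then have "v \<in> pL ` Ps v \<inter> R E i" using v by blast
  then show "v \<in> R E (Suc i)" using vV by auto
qed

lemma R_mono: "E \<subseteq> V \<Longrightarrow> i \<le> j \<Longrightarrow> R E i \<subseteq> R E j"
  using lift_Suc_mono_le[of "R E", OF R_step] by blast

lemma R_bound:
  assumes EV: "E \<subseteq> V" and EH: "\<forall>e\<in>E. real d * real l ^ H * e \<in> \<int>"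
    and EN: "\<forall>v\<in>E \<union> uminus ` S. v \<le> N"
  shows "v \<in> R E k \<Longrightarrow> (k = 0 \<or> v \<notin> R E (k - 1)) \<Longrightarrow>
         real k \<le> real (n+1) * (N - v) / tau a n l d + real H - real (ex v)"
proof (induction k arbitrary: v)
  case 0
  have tp: "tau a n l d > 0" using tau_props by simp
  have vN: "v \<le> N" using EN 0(1) by auto
  then have nn: "real (n+1) * (N - v) / tau a n l d \<ge> 0" using tp by simp
  have "ex v \<le> H"
  proof (cases "v \<in> E")
    case True then show ?thesis using EH by (intro ex_le) auto
  next
    case False
    then obtain \<mu> where mu: "\<mu> \<in> S" "v = -\<mu>" using 0(1) by auto
    have "real d * real l ^ H * v = - (real l ^ H * (real d * \<mu>))" using mu(2) by simp
    also have "\<dots> \<in> \<int>"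
    proof -
      have dm: "real d * \<mu> \<in> \<int>" using dS mu(1) by blast
      show ?thesis by (intro Ints_minus Ints_mult[OF _ dm]) simp
    qed
    finally show ?thesis by (rule ex_le)
  qed
  then have "real (ex v) \<le> real H" by simp
  then show ?case using nn by linarith
next
  case (Suc k)
  have tp: "tau a n l d > 0" using tau_props by simp
  define \<tau> where "\<tau> = tau a n l d"
  have vR: "v \<in> V" "pL ` Ps v \<inter> R E k \<noteq> {}" using Suc.prems(1) by simp_all
  have vnk: "v \<notin> R E k" using Suc.prems(2) by simp
  obtain q where q: "q \<in> Ps v" "pL q \<in> R E k" using vR(2) by blast
  define w where "w = pL q"
  have wR: "w \<in> R E k" using q w_def by simp
  have wnew: "k = 0 \<or> w \<notin> R E (k - 1)"
  proof (cases k)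
    case 0 then show ?thesis by simp
  next
    case (Suc k')
    show ?thesis
    proof (rule disjI2, rule notI)
      assume "w \<in> R E (k - 1)"
      then have "w \<in> R E k'" using Suc by simp
      moreover have "w \<in> pL ` Ps v" using q(1) w_def by simp
      ultimately have "pL ` Ps v \<inter> R E k' \<noteq> {}" by blast
      then have "v \<in> R E (Suc k')" using vR(1) by simp
      then show False using vnk Suc by simp
    qed
  qed
  have IH: "real k \<le> real (n+1) * (N - w) / \<tau> + real H - real (ex w)"
    using Suc.IH[OF wR wnew] unfolding \<tau>_def .
  have wV: "w \<in> V" using R_V[OF EV] wR by blast
  have "v \<le> w" using pL_Ps_ge[OF q(1)] w_def by simp
  moreover have "v \<noteq> w" using wR vnk by blast
  ultimately have vw: "v < w" by simp
  have qm: "q = mm w" using pL_eq[of q w] w_def by simp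
  obtain x j where xj: "(x,j) \<in> P" "q = v * real x + real j" using Ps_memE[OF q(1)] by blast
  have eqm: "mm w = v * real x + real j" using qm xj(2) by simp
  have split: "real (n+1) * (N - v) / \<tau> = real (n+1) * (N - w) / \<tau> + real (n+1) * ((w - v) / \<tau>)"
  proof -
    have e: "real (n+1) * (N - v) = real (n+1) * (N - w) + real (n+1) * (w - v)" by (simp add: algebra_simps)
    show ?thesis by (simp only: e add_divide_distrib times_divide_eq_right)
  qed
  show ?case
  proof (cases "w - v < \<tau>")
    case True
    have lt: "ex v < ex w" using key[OF wV vR(1) vw xj(1) eqm] True unfolding \<tau>_def by blast
    have nn: "real (n+1) * ((w - v) / \<tau>) \<ge> 0" using vw tp unfolding \<tau>_def by simp
    have ee: "real (ex v) + 1 \<le> real (ex w)" using lt by simp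
    show ?thesis unfolding \<tau>_def[symmetric] of_nat_Suc using IH split nn ee by linarith
  next
    case False
    then have "\<tau> \<le> w - v" by simp
    then have h1: "(w - v) / \<tau> \<ge> 1" using tp unfolding \<tau>_def by (simp add: le_divide_eq)
    have "real (n+1) * 1 \<le> real (n+1) * ((w - v) / \<tau>)" by (rule mult_left_mono[OF h1]) simp
    then have big: "real (n+1) * ((w - v) / \<tau>) \<ge> real (n+1)" by simp
    obtain i where i: "x = l^i" "i \<le> n" using PL_memD[OF xj(1)] by blast
    obtain X J I where XJ: "(X,J) \<in> P" "mm w = w * real X + real J" "X = l^I" "I \<le> n"
      by (rule rightmost_min[of w]) blast
    have "v = (mm w - real j) / real x" using eqm P_x(3)[OF xj(1)] by (simp add: field_simps)
    then have vform: "v = (mm w - real j) / real (l^i)" using i(1) by simp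
    have "ex v \<le> (ex w - I) + i"
      using K2[OF wV XJ(1)[unfolded XJ(3)] XJ(2)[unfolded XJ(3)] xj(1)[unfolded i(1)]] vform by simp
    then have "ex v \<le> ex w + n" using i(2) by linarith
    then have ee: "real (ex v) \<le> real (ex w) + real n" by simp
    show ?thesis unfolding \<tau>_def[symmetric] of_nat_Suc using IH split big ee by linarith
  qed
qed

lemma main_loc:
  assumes EV: "E \<subseteq> V" and EH: "\<forall>e\<in>E. real d * real l ^ H * e \<in> \<int>"
    and EN: "\<forall>v\<in>E \<union> uminus ` S. v \<le> N" and Sne: "S \<noteq> {}"
    and ii: "int i \<ge> \<lfloor>real (n + 1) * (N + Max S) / tau a n l d\<rfloor> + int H"
  shows "R E i = (\<Union>j. R E j)"
proof
  show "R E i \<subseteq> (\<Union>j. R E j)" by blast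
  show "(\<Union>j. R E j) \<subseteq> R E i"
  proof (rule ccontr)
    assume "\<not> ?thesis"
    then obtain j where j: "\<not> R E j \<subseteq> R E i" by blast
    have "\<exists>k\<ge>i. \<not> R E (Suc k) \<subseteq> R E k"
    proof (rule ccontr)
      assume "\<not> ?thesis"
      then have st: "\<And>k. i \<le> k \<Longrightarrow> R E (Suc k) \<subseteq> R E k" by blast
      have "R E (i + m) \<subseteq> R E i" for m
      proof (induction m)
        case 0 then show ?case by simp
      next
        case (Suc m)
        have "R E (Suc (i + m)) \<subseteq> R E (i + m)" using st[of "i + m"] by simp
        then show ?case using Suc by simp
      qed
      moreover have "i < j"
      proof (rule ccontr)
        assume "\<not> i < j"
        then have "R E j \<subseteq> R E i" using R_mono[OF EV, of j i] by simp
        then show False using j by blast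
      qed
      ultimately have "R E (i + (j - i)) \<subseteq> R E i" by blast
      moreover have "i + (j - i) = j" using \<open>i < j\<close> by simp
      ultimately have "R E j \<subseteq> R E i" by simp
      then show False using j by blast
    qed
    then obtain k v where k: "i \<le> k" "v \<in> R E (Suc k)" "v \<notin> R E k" by blast
    define \<tau> where "\<tau> = tau a n l d"
    have tp: "\<tau> > 0" using tau_props unfolding \<tau>_def by simp
    have b: "real (Suc k) \<le> real (n+1) * (N - v) / \<tau> + real H - real (ex v)"
      using R_bound[OF EV EH EN k(2)] k(3) unfolding \<tau>_def by simp
    have vV: "v \<in> V" using R_V[OF EV] k(2) by blast
    have "-Max S \<le> v" using V_ge[OF Sne vV] .
    then have "N - v \<le> N + Max S" by simp
    then have "real (n+1) * (N - v) \<le> real (n+1) * (N + Max S)" by (intro mult_left_mono) auto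
    then have "real (n+1) * (N - v) / \<tau> \<le> real (n+1) * (N + Max S) / \<tau>" using tp by (simp add: divide_right_mono)
    then have "real (Suc k) - real H \<le> real (n+1) * (N + Max S) / \<tau>" using b by simp
    then have "of_int (int (Suc k) - int H) \<le> real (n+1) * (N + Max S) / \<tau>" by simp
    then have "int (Suc k) - int H \<le> \<lfloor>real (n+1) * (N + Max S) / \<tau>\<rfloor>" by (simp only: le_floor_iff)
    then have "int (Suc k) \<le> int i" using ii unfolding \<tau>_def by simp
    then show False using k(1) by simp
  qed
qed

end

theorem mainTheorem19:
  fixes a :: "nat \<Rightarrow> 'a::field poly" and n l d H :: nat and N :: real and E :: "real set"
  assumes "n \<ge> 1" and "l \<ge> 2" and "a 0 \<noteq> 0" and "a n \<noteq> 0"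
    and "d \<ge> 1" and "\<forall>\<mu>\<in>slopes a n l. real d * \<mu> \<in> \<int>"
    and "finite E" and "E \<subseteq> Vset a n l"
    and "\<forall>e\<in>E. real d * real l ^ H * e \<in> \<int>"
    and "N \<in> \<rat>" and "N \<ge> 0" and "\<forall>v\<in>E \<union> uminus ` slopes a n l. v \<le> N"
  shows "\<forall>i::nat. int i \<ge> \<lfloor>real (n + 1) * (N + Max (slopes a n l)) / tau a n l d\<rfloor> + int H
           \<longrightarrow> Rseq a n l E i = (\<Union>j. Rseq a n l E j)"
proof -
  interpret M: mset2 a n l d
    by unfold_locales (use assms in auto)
  show ?thesis
  proof (intro allI impI)
    fix i :: nat
    assume ii: "int i \<ge> \<lfloor>real (n + 1) * (N + Max (slopes a n l)) / tau a n l d\<rfloor> + int H"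
    show "Rseq a n l E i = (\<Union>j. Rseq a n l E j)"
    proof (cases "slopes a n l = {}")
      case False
      show ?thesis by (rule M.main_loc[OF assms(8) assms(9) assms(12) False ii])
    next
      case True
      have "Vseq a n l k = {}" for k
        by (induction k) (use True in auto)
      then have V0: "Vset a n l = {}" unfolding Vset_def by simp
      have "Rseq a n l E k = {}" for k
        using M.R_V[OF assms(8), of k] V0 by simp
      then show ?thesis by simp
    qed
  qed
qed

end
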